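(* Let $K\ge 1$ be an integer, $\mathcal{I}=\{1,\dots,K\}$, and let $\lambda_i>0$, $\gamma_{ui}>0$, $\gamma_{di}>0$, $\widetilde{\gamma}_{ui}>0$, $\widetilde{\gamma}_{di}>0$ ($i\in\mathcal{I}$) be given, together with asset proportions $m_i>0$ ($i\in\mathcal{I}$) satisfying $\sum_{i\in\mathcal{I}}m_i<1$. Let $E=\{(l,n)\}\cup\{(hi,n),(hi,o),(li,o): i\in\mathcal{I}\}$. Then there exists a unique function $\mu:E\to[0,\infty)$ (a steady state of the partially segmented market) satisfying, for all $i\in\mathcal{I}$, \[0=-\lambda_i\mu(hi,n)\mu(li,o)+\widetilde{\gamma}_{ui}\mu(l,n)-\widetilde{\gamma}_{di}\mu(hi,n),\] \[0=-\lambda_i\mu(hi,n)\mu(li,o)-\gamma_{ui}\mu(li,o)+\gamma_{di}\mu(hi,o),\] together with the constraints \[\mu(hi,o)+\mu(li,o)=m_i\ \ (i\in\mathcal{I}),\qquad \sum_{i\in\mathcal{I}}m_i+\sum_{i\in\mathcal{I}}\mu(hi,n)+\mu(l,n)=1.\]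
   Context: This is the stationary version of the partially segmented over-the-counter market model: $\mu(z)$ is the proportion of investors in state $z\in E$, where $(l,n)$ denotes low liquidity-type investors owning no asset, $(hi,n)$ high-type investors owning no asset and seeking to buy asset $i$, and $(hi,o)$/$(li,o)$ high/low-type investors owning asset $i$. The time-dependent dynamics are $\dot\mu_t(hi,n)=-\lambda_i\mu_t(hi,n)\mu_t(li,o)+\widetilde{\gamma}_{ui}\mu_t(l,n)-\widetilde{\gamma}_{di}\mu_t(hi,n)$ and $\dot\mu_t(li,o)=-\lambda_i\mu_t(hi,n)\mu_t(li,o)-\gamma_{ui}\mu_t(li,o)+\gamma_{di}\mu_t(hi,o)$ under the stated constraints; a steady state is a solution with zero time derivative. *)

theory Defs
  imports "HOL-Analysis.Analysis" "HOL-Library.FuncSet"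
begin

text \<open>Investor states: LN = (l,n); HN i = (hi,n); HO i = (hi,o); LO i = (li,o).\<close>
datatype state = LN | HN nat | HO nat | LO nat

definition state_space :: "nat \<Rightarrow> state set" where
  "state_space K = {LN} \<union> HN ` {1..K} \<union> HO ` {1..K} \<union> LO ` {1..K}"

definition is_steady_state ::
  "nat \<Rightarrow> (nat \<Rightarrow> real) \<Rightarrow> (nat \<Rightarrow> real) \<Rightarrow> (nat \<Rightarrow> real) \<Rightarrow> (nat \<Rightarrow> real)
   \<Rightarrow> (nat \<Rightarrow> real) \<Rightarrow> (nat \<Rightarrow> real) \<Rightarrow> (state \<Rightarrow> real) \<Rightarrow> bool" where
  "is_steady_state K lam gu gd gtu gtd m \<mu> \<longleftrightarrow>
     (\<forall>i\<in>{1..K}.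
        0 = - lam i * \<mu> (HN i) * \<mu> (LO i) + gtu i * \<mu> LN - gtd i * \<mu> (HN i) \<and>
        0 = - lam i * \<mu> (HN i) * \<mu> (LO i) - gu i * \<mu> (LO i) + gd i * \<mu> (HO i) \<and>
        \<mu> (HO i) + \<mu> (LO i) = m i) \<and>
     (\<Sum>i\<in>{1..K}. m i) + (\<Sum>i\<in>{1..K}. \<mu> (HN i)) + \<mu> LN = 1"

end

theory Submission
  imports Defs
begin

lemma F_mono:
  fixes l a k b h1 h2 :: real
  assumes "l > 0" "a > 0" "k \<ge> 0" "b > 0" "0 \<le> h1" "h1 < h2"
  shows "l*h1*k/(l*h1+a) + b*h1 < l*h2*k/(l*h2+a) + b*h2"
proof -
  have p1: "l*h1+a > 0" "l*h2+a > 0" using assms by (auto intro: add_nonneg_pos)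
  have "h1*(l*h2+a) \<le> h2*(l*h1+a)" using assms by (simp add: algebra_simps)
  hence "h1/(l*h1+a) \<le> h2/(l*h2+a)" using p1 by (simp add: divide_simps mult.commute)
  hence "l*k*(h1/(l*h1+a)) \<le> l*k*(h2/(l*h2+a))"
    using assms by (intro mult_left_mono) auto
  moreover have "b*h1 < b*h2" using assms by simp
  ultimately show ?thesis by (simp add: algebra_simps)
qed

lemma solve_i:
  fixes l gu gd gtu gtd m x h y z :: real
  assumes "l > 0" "gu > 0" "gd > 0" "h \<ge> 0" "y \<ge> 0"
    and e1: "0 = - l * h * y + gtu * x - gtd * h"
    and e2: "0 = - l * h * y - gu * y + gd * z"
    and e3: "z + y = m"
  shows "y = gd*m/(l*h+(gu+gd))" "gtu * x = l*h*(gd*m)/(l*h+(gu+gd)) + gtd*h"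
proof -
  have q: "l*h+(gu+gd) > 0" using assms by (auto intro: add_nonneg_pos)
  have mm: "m = z + y" using e3 by simp
  have "y*(l*h+(gu+gd)) = gd*m" using e2 unfolding mm by (simp add: algebra_simps)
  thus y: "y = gd*m/(l*h+(gu+gd))" using q by (simp add: field_simps)
  show "gtu * x = l*h*(gd*m)/(l*h+(gu+gd)) + gtd*h"
    using e1 y by simp
qed

lemma quad_root:
  fixes A B C s :: real
  assumes "A > 0" "s^2 = B^2 + 4*A*C"
  shows "A*((s-B)/(2*A))^2 + B*((s-B)/(2*A)) - C = 0"
proof -
  have "A*((s-B)/(2*A))^2 + B*((s-B)/(2*A)) - C = (s^2 - B^2 - 4*A*C)/(4*A)"
    using assms(1) by (simp add: field_simps power2_eq_square)
  thus ?thesis using assms(2) by simp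
qed
lemma quad_F:
  fixes l gd m gtd a gtu x h :: real
  assumes "l*h+a > 0"
    and "(gtd*l)*h^2 + (l*gd*m + gtd*a - gtu*l*x)*h - gtu*x*a = 0"
  shows "l*h*(gd*m)/(l*h+a) + gtd*h = gtu*x"
proof -
  have "l*h*(gd*m) + gtd*h*(l*h+a) = gtu*x*(l*h+a)"
    using assms(2) by (simp add: algebra_simps power2_eq_square)
  hence "l*h*(gd*m) = (gtu*x - gtd*h)*(l*h+a)" by (simp add: algebra_simps)
  hence "l*h*(gd*m)/(l*h+a) = gtu*x - gtd*h" using assms(1) by simp
  thus ?thesis by simp
qed
lemma eq2_gen:
  fixes l h gu gd m :: real
  assumes "l*h+(gu+gd) > 0"
  shows "0 = - l * h * (gd*m/(l*h+(gu+gd))) - gu * (gd*m/(l*h+(gu+gd))) + gd * (m - gd*m/(l*h+(gu+gd)))"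
proof -
  define y where "y = gd*m/(l*h+(gu+gd))"
  have "y*(l*h+(gu+gd)) = gd*m" using assms by (simp add: y_def)
  hence "0 = - l * h * y - gu * y + gd * (m - y)" by (simp add: algebra_simps)
  thus ?thesis by (simp add: y_def)
qed

lemma mem_ss[simp]:
  "LN \<in> state_space K" "HN n \<in> state_space K \<longleftrightarrow> n \<in> {1..K}"
  "HO n \<in> state_space K \<longleftrightarrow> n \<in> {1..K}" "LO n \<in> state_space K \<longleftrightarrow> n \<in> {1..K}"
  by (auto simp: state_space_def)

theorem proposition2:
  fixes K :: nat
    and lam gu gd gtu gtd m :: "nat \<Rightarrow> real"
  assumes "K \<ge> 1"
    and "\<forall>i\<in>{1..K}. lam i > 0 \<and> gu i > 0 \<and> gd i > 0 \<and> gtu i > 0 \<and> gtd i > 0 \<and> m i > 0"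
    and "(\<Sum>i\<in>{1..K}. m i) < 1"
  shows "\<exists>!\<mu>. \<mu> \<in> extensional_funcset (state_space K) {0..} \<and>
               is_steady_state K lam gu gd gtu gtd m \<mu>"
proof -
  have P: "lam i > 0" "gu i > 0" "gd i > 0" "gtu i > 0" "gtd i > 0" "m i > 0" if "i \<in> {1..K}" for i
    using assms(2) that by auto
  define c where "c = 1 - (\<Sum>i\<in>{1..K}. m i)"
  have c0: "c > 0" using assms(3) by (simp add: c_def)
  define F where "F i h = lam i*h*(gd i*m i)/(lam i*h+(gu i+gd i)) + gtd i*h" for i h
  define SS where "SS \<mu> \<longleftrightarrow> \<mu> \<in> extensional_funcset (state_space K) {0..} \<and>
               is_steady_state K lam gu gd gtu gtd m \<mu>" for \<mu>
  have sol: "\<mu> (LO i) = gd i*m i/(lam i*\<mu> (HN i)+(gu i+gd i)) \<and> gtu i * \<mu> LN = F i (\<mu> (HN i))"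
    if "SS \<mu>" "i \<in> {1..K}" for \<mu> i
  proof -
    have "\<mu> (HN i) \<ge> 0" "\<mu> (LO i) \<ge> 0" using that by (auto simp: SS_def PiE_def Pi_def)
    moreover have "0 = - lam i * \<mu> (HN i) * \<mu> (LO i) + gtu i * \<mu> LN - gtd i * \<mu> (HN i)"
      "0 = - lam i * \<mu> (HN i) * \<mu> (LO i) - gu i * \<mu> (LO i) + gd i * \<mu> (HO i)"
      "\<mu> (HO i) + \<mu> (LO i) = m i" using that by (auto simp: SS_def is_steady_state_def)
    ultimately show ?thesis using solve_i[of "lam i" "gu i" "gd i" "\<mu> (HN i)" "\<mu> (LO i)"] P[OF that(2)]
      unfolding F_def by blast
  qed
  have Fmono: "F i h1 < F i h2" if "i \<in> {1..K}" "0 \<le> h1" "h1 < h2" for i h1 h2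
    unfolding F_def using F_mono[of "lam i" "gu i + gd i" "gd i * m i" "gtd i" h1 h2] P[OF that(1)] that
    by (auto simp: mult.assoc)
  have Finj: "h1 = h2" if "i \<in> {1..K}" "0 \<le> h1" "0 \<le> h2" "F i h1 = F i h2" for i h1 h2
    using Fmono[OF that(1) that(2)] Fmono[OF that(1) that(3)] that(4)
    by (metis linorder_neqE_linordered_idom less_irrefl)
  have le: "\<mu>1 LN = \<mu>2 LN" if "SS \<mu>1" "SS \<mu>2" "\<mu>1 LN \<le> \<mu>2 LN" for \<mu>1 \<mu>2
  proof -
    have hle: "\<mu>1 (HN i) \<le> \<mu>2 (HN i)" if "i \<in> {1..K}" for i
    proof (rule ccontr)
      assume "\<not> ?thesis"
      hence "F i (\<mu>2 (HN i)) < F i (\<mu>1 (HN i))"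
        using Fmono[OF that] \<open>SS \<mu>2\<close> that by (auto simp: SS_def PiE_def Pi_def)
      hence "gtu i * \<mu>2 LN < gtu i * \<mu>1 LN" using sol[OF \<open>SS \<mu>1\<close> that] sol[OF \<open>SS \<mu>2\<close> that] by simp
      thus False using P[OF that] \<open>\<mu>1 LN \<le> \<mu>2 LN\<close> by (simp add: mult_le_cancel_left_pos)
    qed
    have "(\<Sum>i\<in>{1..K}. \<mu>1 (HN i)) \<le> (\<Sum>i\<in>{1..K}. \<mu>2 (HN i))" by (rule sum_mono) (rule hle)
    moreover have "(\<Sum>i\<in>{1..K}. m i) + (\<Sum>i\<in>{1..K}. \<mu>1 (HN i)) + \<mu>1 LN = 1"
      "(\<Sum>i\<in>{1..K}. m i) + (\<Sum>i\<in>{1..K}. \<mu>2 (HN i)) + \<mu>2 LN = 1"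
      using that by (auto simp: SS_def is_steady_state_def)
    ultimately show ?thesis using that(3) by linarith
  qed
  have uniq: "\<mu>1 = \<mu>2" if "SS \<mu>1" "SS \<mu>2" for \<mu>1 \<mu>2
  proof -
    have x: "\<mu>1 LN = \<mu>2 LN" using le[OF that] le[OF that(2,1)] by linarith
    have h: "\<mu>1 (HN i) = \<mu>2 (HN i)" if "i \<in> {1..K}" for i
      using Finj[OF that] sol[OF \<open>SS \<mu>1\<close> that] sol[OF \<open>SS \<mu>2\<close> that] x \<open>SS \<mu>1\<close> \<open>SS \<mu>2\<close> that
      by (auto simp: SS_def PiE_def Pi_def)
    have y: "\<mu>1 (LO i) = \<mu>2 (LO i)" if "i \<in> {1..K}" for i
      using sol[OF \<open>SS \<mu>1\<close> that] sol[OF \<open>SS \<mu>2\<close> that] h[OF that] by simp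
    have z: "\<mu>1 (HO i) = \<mu>2 (HO i)" if "i \<in> {1..K}" for i
    proof -
      have "\<mu>1 (HO i) + \<mu>1 (LO i) = m i" "\<mu>2 (HO i) + \<mu>2 (LO i) = m i"
        using that \<open>SS \<mu>1\<close> \<open>SS \<mu>2\<close> unfolding SS_def is_steady_state_def by blast+
      thus ?thesis using y[OF that] by linarith
    qed
    have out: "\<mu>1 s = \<mu>2 s" if "s \<notin> state_space K" for s
      using that \<open>SS \<mu>1\<close> \<open>SS \<mu>2\<close> by (auto simp: SS_def PiE_def extensional_def)
    show ?thesis
    proof
      fix s show "\<mu>1 s = \<mu>2 s"
        by (cases s) (metis x h y z out mem_ss)+
    qed
  qed
  define A where "A i = gtd i * lam i" for i
  define B where "B i x = lam i * gd i * m i + gtd i * (gu i + gd i) - gtu i * lam i * x" for i x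
  define C where "C i x = gtu i * x * (gu i + gd i)" for i x
  define H where "H i x = (sqrt ((B i x)^2 + 4 * A i * C i x) - B i x) / (2 * A i)" for i x
  have Hnn: "H i x \<ge> 0" if "i \<in> {1..K}" "x \<ge> 0" for i x
  proof -
    have "A i * C i x \<ge> 0" using P[OF that(1)] that(2) by (simp add: A_def C_def)
    hence "sqrt ((B i x)^2) \<le> sqrt ((B i x)^2 + 4 * A i * C i x)"
      by (intro real_sqrt_le_mono) simp
    hence "B i x \<le> sqrt ((B i x)^2 + 4 * A i * C i x)" by (smt (verit) real_sqrt_abs)
    moreover have "A i > 0" using P[OF that(1)] by (simp add: A_def)
    ultimately show ?thesis by (simp add: H_def)
  qed
  have H0: "H i 0 = 0" if "i \<in> {1..K}" for i
  proof -
    have "B i 0 > 0" using P[OF that] by (simp add: B_def add_pos_pos)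
    thus ?thesis by (simp add: H_def C_def)
  qed
  have Hq: "A i * (H i x)^2 + B i x * H i x - C i x = 0" if "i \<in> {1..K}" "x \<ge> 0" for i x
  proof -
    have "A i * C i x \<ge> 0" using P[OF that(1)] that(2) by (simp add: A_def C_def)
    moreover have "0 \<le> (B i x)^2" by simp
    ultimately have "0 \<le> (B i x)^2 + 4 * A i * C i x" by linarith
    hence D: "(sqrt ((B i x)^2 + 4 * A i * C i x))^2 = (B i x)^2 + 4 * A i * C i x"
      by (rule real_sqrt_pow2)
    have Ap: "A i > 0" using P[OF that(1)] by (simp add: A_def)
    show ?thesis unfolding H_def by (rule quad_root[OF Ap D])
  qed
  have HF: "F i (H i x) = gtu i * x" if "i \<in> {1..K}" "x \<ge> 0" for i x
  proof -
    have q: "lam i * H i x + (gu i + gd i) > 0" using P[OF that(1)] Hnn[OF that]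
      by (auto intro: add_nonneg_pos)
    show ?thesis using quad_F[OF q] Hq[OF that] unfolding F_def A_def B_def C_def by simp
  qed
  define g where "g x = x + (\<Sum>i\<in>{1..K}. H i x)" for x
  have cont: "continuous_on {0..c} g"
    unfolding g_def H_def A_def B_def C_def
    apply (intro continuous_intros)
    using P by fastforce
  have g0: "g 0 \<le> c" using c0 H0 by (simp add: g_def)
  have "0 \<le> (\<Sum>i\<in>{1..K}. H i c)" using Hnn c0 by (intro sum_nonneg) auto
  hence gc: "c \<le> g c" unfolding g_def by simp
  obtain x0 where x0: "0 \<le> x0" "x0 \<le> c" "g x0 = c"
    using IVT'[of g 0 c c, OF g0 gc _ cont] c0 by auto
  define \<mu>0 where "\<mu>0 s = (case s of LN \<Rightarrow> x0 | HN i \<Rightarrow> H i x0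
      | LO i \<Rightarrow> gd i*m i/(lam i*H i x0+(gu i+gd i))
      | HO i \<Rightarrow> m i - gd i*m i/(lam i*H i x0+(gu i+gd i)))" for s
  define \<mu> where "\<mu> = restrict \<mu>0 (state_space K)"
  have lo: "0 \<le> gd i*m i/(lam i*H i x0+(gu i+gd i)) \<and> gd i*m i/(lam i*H i x0+(gu i+gd i)) \<le> m i"
    if "i \<in> {1..K}" for i
  proof -
    have "gd i \<le> lam i*H i x0+(gu i+gd i)" using P[OF that] Hnn[OF that x0(1)] by simp
    hence "gd i*m i \<le> m i * (lam i*H i x0+(gu i+gd i))" using P[OF that]
      by (metis mult.commute mult_left_mono less_imp_le)
    moreover have "lam i*H i x0+(gu i+gd i) > 0" using P[OF that] Hnn[OF that x0(1)]
      by (auto intro: add_nonneg_pos)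
    ultimately show ?thesis using P[OF that] by (simp add: divide_simps)
  qed
  have "SS \<mu>"
    unfolding SS_def
  proof
    show "\<mu> \<in> extensional_funcset (state_space K) {0..}"
      unfolding \<mu>_def PiE_def Pi_def
    proof (auto)
      fix s assume "s \<in> state_space K"
      then show "0 \<le> \<mu>0 s" unfolding state_space_def \<mu>0_def using x0 Hnn lo by auto
    qed
    show "is_steady_state K lam gu gd gtu gtd m \<mu>"
      unfolding is_steady_state_def
    proof (intro conjI ballI)
      fix i assume i: "i \<in> {1..K}"
      have q: "lam i * H i x0 + (gu i + gd i) > 0" using P[OF i] Hnn[OF i x0(1)]
        by (auto intro: add_nonneg_pos)
      have hf: "F i (H i x0) = gtu i * x0" by (rule HF[OF i x0(1)])
      show "0 = - lam i * \<mu> (HN i) * \<mu> (LO i) + gtu i * \<mu> LN - gtd i * \<mu> (HN i)"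
        using i hf unfolding \<mu>_def \<mu>0_def F_def by simp
      show "0 = - lam i * \<mu> (HN i) * \<mu> (LO i) - gu i * \<mu> (LO i) + gd i * \<mu> (HO i)"
        using i eq2_gen[OF q] unfolding \<mu>_def \<mu>0_def by simp
      show "\<mu> (HO i) + \<mu> (LO i) = m i" using i unfolding \<mu>_def \<mu>0_def by simp
    next
      have "(\<Sum>i\<in>{1..K}. \<mu> (HN i)) = (\<Sum>i\<in>{1..K}. H i x0)"
        by (rule sum.cong) (auto simp: \<mu>_def \<mu>0_def)
      then show "(\<Sum>i\<in>{1..K}. m i) + (\<Sum>i\<in>{1..K}. \<mu> (HN i)) + \<mu> LN = 1"
        using x0(3) unfolding g_def c_def by (simp add: \<mu>_def \<mu>0_def)
    qed
  qed
  then show ?thesis unfolding SS_def[symmetric] using uniq by blast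
qed

end
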